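(* Let $n$ be a positive integer and $k$ an even integer with $n/2+1\le k\le n-1$. Then $H_{n,k}$ is a core.
   Context: $H_{n,k}$ is the graph whose vertices are the even-weight elements of $\mathbb{Z}_2^n$, with $x\sim y$ iff $x$ and $y$ differ in exactly $k$ coordinates. A graph is a core if every homomorphism (adjacency-preserving map) from it to itself is an automorphism. *)

theory Defs
  imports Main
begin

text \<open>An element x of Z_2^n is identified with its support, a subset of {0..<n}.
  Hamming distance = card of the symmetric difference; weight = card.\<close>

definition hdist :: "nat set \<Rightarrow> nat set \<Rightarrow> nat" where
  "hdist x y = card ((x - y) \<union> (y - x))"

definition H_verts :: "nat \<Rightarrow> nat set set" where
  "H_verts n = {x. x \<subseteq> {0..<n} \<and> even (card x)}"

definition H_adj :: "nat \<Rightarrow> nat \<Rightarrow> nat set \<Rightarrow> nat set \<Rightarrow> bool" where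
  "H_adj n k x y \<longleftrightarrow> x \<in> H_verts n \<and> y \<in> H_verts n \<and> hdist x y = k"

definition is_endo :: "'a set \<Rightarrow> ('a \<Rightarrow> 'a \<Rightarrow> bool) \<Rightarrow> ('a \<Rightarrow> 'a) \<Rightarrow> bool" where
  "is_endo V E f \<longleftrightarrow> f ` V \<subseteq> V \<and> (\<forall>x\<in>V. \<forall>y\<in>V. E x y \<longrightarrow> E (f x) (f y))"

definition is_auto :: "'a set \<Rightarrow> ('a \<Rightarrow> 'a \<Rightarrow> bool) \<Rightarrow> ('a \<Rightarrow> 'a) \<Rightarrow> bool" where
  "is_auto V E f \<longleftrightarrow> bij_betw f V V \<and> (\<forall>x\<in>V. \<forall>y\<in>V. E x y \<longleftrightarrow> E (f x) (f y))"

definition is_core :: "'a set \<Rightarrow> ('a \<Rightarrow> 'a \<Rightarrow> bool) \<Rightarrow> bool" where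
  "is_core V E \<longleftrightarrow> (\<forall>f. is_endo V E f \<longrightarrow> is_auto V E f)"

end

theory Submission
  imports Defs Complex_Main
begin

definition KR :: "nat set \<Rightarrow> nat set \<Rightarrow> nat \<Rightarrow> int" where
  "KR U a r = (\<Sum>R\<in>{R. R \<subseteq> U \<and> card R = r}. (-1)^card (R \<inter> a))"

lemma KR_rec:
  assumes fin: "finite U" and p: "p \<in> U"
  shows "KR U a (Suc r) = KR (U - {p}) (a - {p}) (Suc r)
           + (if p \<in> a then -1 else 1) * KR (U - {p}) (a - {p}) r"
proof -
  let ?U' = "U - {p}"
  let ?A = "{R. R \<subseteq> ?U' \<and> card R = Suc r}"
  let ?B = "{R. R \<subseteq> ?U' \<and> card R = r}"
  have fU': "finite ?U'" using fin by simp
  have eq: "{R. R \<subseteq> U \<and> card R = Suc r} = ?A \<union> insert p ` ?B"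
  proof (rule set_eqI, rule iffI)
    fix R assume "R \<in> {R. R \<subseteq> U \<and> card R = Suc r}"
    hence R: "R \<subseteq> U" "card R = Suc r" by auto
    show "R \<in> ?A \<union> insert p ` ?B"
    proof (cases "p \<in> R")
      case True
      have "finite R" using R fin finite_subset by blast
      hence "card (R - {p}) = r" using R True by simp
      moreover have "R = insert p (R - {p})" using True by blast
      ultimately show ?thesis using R by blast
    next
      case False thus ?thesis using R by blast
    qed
  next
    fix R assume "R \<in> ?A \<union> insert p ` ?B"
    thus "R \<in> {R. R \<subseteq> U \<and> card R = Suc r}"
    proof
      assume "R \<in> ?A" thus ?thesis by auto
    next
      assume "R \<in> insert p ` ?B"
      then obtain R' where R': "R' \<subseteq> ?U'" "card R' = r" "R = insert p R'" by blast
      have "finite R'" using R' fU' finite_subset by blast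
      moreover have "p \<notin> R'" using R' by blast
      ultimately show ?thesis using R' p by auto
    qed
  qed
  have disj: "?A \<inter> insert p ` ?B = {}" by blast
  have fA: "finite ?A" using fU' by (simp add: finite_subset)
  have fB: "finite ?B" using fU' by (simp add: finite_subset)
  have inj: "inj_on (insert p) ?B"
    by (rule inj_onI) (metis (no_types, lifting) Diff_insert_absorb insert_Diff_single mem_Collect_eq subset_Diff_insert)
  have s1: "(\<Sum>R\<in>?A. (-1::int)^card (R \<inter> a)) = KR ?U' (a - {p}) (Suc r)"
    unfolding KR_def by (rule sum.cong) (auto simp: Int_Diff dest!: subsetD intro!: arg_cong[where f="\<lambda>X. (-1::int)^card X"])
  have s2: "(\<Sum>R\<in>insert p ` ?B. (-1::int)^card (R \<inter> a)) =
      (if p \<in> a then -1 else 1) * KR ?U' (a - {p}) r"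
  proof -
    have "(\<Sum>R\<in>insert p ` ?B. (-1::int)^card (R \<inter> a)) = (\<Sum>R\<in>?B. (-1)^card (insert p R \<inter> a))"
      by (simp add: sum.reindex[OF inj])
    also have "\<dots> = (\<Sum>R\<in>?B. (if p \<in> a then -1 else 1) * (-1)^card (R \<inter> (a - {p})))"
    proof (rule sum.cong[OF refl])
      fix R assume R: "R \<in> ?B"
      have fR: "finite R" using R fU' finite_subset by blast
      have pR: "p \<notin> R" using R by blast
      have e: "R \<inter> (a - {p}) = R \<inter> a" using pR by blast
      show "(-1::int)^card (insert p R \<inter> a) = (if p \<in> a then -1 else 1) * (-1)^card (R \<inter> (a - {p}))"
      proof (cases "p \<in> a")
        case True
        hence "insert p R \<inter> a = insert p (R \<inter> a)" by blast
        moreover have "p \<notin> R \<inter> a" using pR by blast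
        ultimately have "card (insert p R \<inter> a) = Suc (card (R \<inter> a))" using fR by simp
        thus ?thesis using True e by simp
      next
        case False
        hence "insert p R \<inter> a = R \<inter> a" by blast
        thus ?thesis using False e by simp
      qed
    qed
    also have "\<dots> = (if p \<in> a then -1 else 1) * KR ?U' (a - {p}) r"
      unfolding KR_def by (simp add: sum_distrib_left)
    finally show ?thesis .
  qed
  show ?thesis
    unfolding KR_def[of U] eq
    by (subst sum.union_disjoint[OF fA finite_imageI[OF fB] disj]) (use s1 s2 in \<open>simp add: KR_def\<close>)
qed

lemma KR_0: assumes "finite U" shows "KR U a 0 = 1"
proof -
  have "{R. R \<subseteq> U \<and> card R = 0} = {{}}"
  proof (rule set_eqI, rule iffI)
    fix R assume "R \<in> {R. R \<subseteq> U \<and> card R = 0}"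
    hence "R \<subseteq> U" "card R = 0" by auto
    hence "R = {}" using assms by (meson card_0_eq finite_subset)
    thus "R \<in> {{}}" by simp
  qed simp
  thus ?thesis unfolding KR_def by simp
qed

lemma KR_empty: assumes "finite U" shows "KR U {} r = int (card U choose r)"
  unfolding KR_def using n_subsets[OF assms, of r] by simp

lemma KR_1: assumes "finite U" "a \<subseteq> U" shows "KR U a 1 = int (card U) - 2 * int (card a)"
proof -
  have e: "{R. R \<subseteq> U \<and> card R = 1} = (\<lambda>x. {x}) ` U"
    by (auto simp: card_1_singleton_iff)
  have "KR U a 1 = (\<Sum>x\<in>U. (-1::int)^card ({x} \<inter> a))"
    unfolding KR_def e by (subst sum.reindex) (auto intro: inj_onI)
  also have "\<dots> = (\<Sum>x\<in>U. if x \<in> a then -1 else 1)"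
    by (rule sum.cong) auto
  also have "\<dots> = - int (card (U \<inter> a)) + int (card (U - a))"
    using assms(1) by (simp add: sum.If_cases Diff_eq)
  also have "\<dots> = int (card U) - 2 * int (card a)"
  proof -
    have "U \<inter> a = a" using assms by blast
    moreover have "card (U - a) = card U - card a" using assms by (simp add: card_Diff_subset finite_subset)
    moreover have "card a \<le> card U" using assms by (simp add: card_mono)
    ultimately show ?thesis by simp
  qed
  finally show ?thesis .
qed

lemma neg1_pow_diff: "j \<le> m \<Longrightarrow> (-1::int)^(m - j) = (-1)^m * (-1)^j"
proof -
  assume "j \<le> m"
  then obtain d where m: "m = j + d" using le_Suc_ex by blast
  have "(-1::int)^j * (-1)^j = 1" by (simp add: power_mult_distrib[symmetric])
  thus ?thesis unfolding m by (simp add: power_add)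
qed

lemma KR_compl:
  assumes fin: "finite U" and a: "a \<subseteq> U" and r: "r \<le> card U"
  shows "KR U a (card U - r) = (-1)^card a * KR U a r"
proof -
  let ?A = "{R. R \<subseteq> U \<and> card R = r}"
  have inj: "inj_on (\<lambda>R. U - R) ?A" by (rule inj_onI) auto
  have img: "(\<lambda>R. U - R) ` ?A = {R. R \<subseteq> U \<and> card R = card U - r}"
  proof (rule set_eqI, rule iffI)
    fix R' assume "R' \<in> (\<lambda>R. U - R) ` ?A"
    then obtain R where "R \<subseteq> U" "card R = r" "R' = U - R" by blast
    thus "R' \<in> {R. R \<subseteq> U \<and> card R = card U - r}" using fin by (auto simp: card_Diff_subset finite_subset)
  next
    fix R' assume R': "R' \<in> {R. R \<subseteq> U \<and> card R = card U - r}"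
    hence "R' = U - (U - R')" "U - R' \<subseteq> U" by auto
    moreover have "card (U - R') = r" using R' fin r by (auto simp: card_Diff_subset finite_subset)
    ultimately show "R' \<in> (\<lambda>R. U - R) ` ?A" by blast
  qed
  have "KR U a (card U - r) = (\<Sum>R\<in>?A. (-1::int)^card ((U - R) \<inter> a))"
    unfolding KR_def img[symmetric] by (simp add: sum.reindex[OF inj])
  also have "\<dots> = (\<Sum>R\<in>?A. (-1)^card a * (-1)^card (R \<inter> a))"
  proof (rule sum.cong[OF refl])
    fix R assume R: "R \<in> ?A"
    have "(U - R) \<inter> a = a - (R \<inter> a)" using a by blast
    hence "card ((U - R) \<inter> a) = card a - card (R \<inter> a)"
      using a fin by (simp add: card_Diff_subset finite_subset)
    moreover have "card (R \<inter> a) \<le> card a" using a fin by (simp add: card_mono finite_subset)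
    ultimately show "(-1::int)^card ((U - R) \<inter> a) = (-1)^card a * (-1)^card (R \<inter> a)"
      by (simp add: neg1_pow_diff)
  qed
  also have "\<dots> = (-1)^card a * KR U a r" unfolding KR_def by (simp add: sum_distrib_left)
  finally show ?thesis .
qed

lemma comb_step:
  fixes m r' :: nat and X Y K B C1 C0 :: int
  assumes m: "m > 0"
    and K: "\<bar>K\<bar> \<le> \<bar>X\<bar> + \<bar>Y\<bar>"
    and hX: "int m * \<bar>X\<bar> \<le> (int m - 2*int r' - 2) * C1"
    and hY: "int m * \<bar>Y\<bar> \<le> (int m - 2*int r') * C0"
    and I1: "(int m + 1) * C1 = (int m - int r') * B"
    and I2: "(int m + 1) * C0 = (int r' + 1) * B"
  shows "(int m + 1) * \<bar>K\<bar> \<le> (int m + 1 - 2*(int r' + 1)) * B"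
proof -
  have p: "int m * (int m + 1) \<ge> 0" by simp
  have "int m * ((int m + 1) * \<bar>K\<bar>) = (int m * (int m + 1)) * \<bar>K\<bar>" by (simp add: algebra_simps)
  also have "\<dots> \<le> (int m * (int m + 1)) * (\<bar>X\<bar> + \<bar>Y\<bar>)" by (rule mult_left_mono[OF K p])
  also have "\<dots> = (int m + 1) * (int m * \<bar>X\<bar>) + (int m + 1) * (int m * \<bar>Y\<bar>)" by (simp add: algebra_simps)
  also have "\<dots> \<le> (int m + 1) * ((int m - 2*int r' - 2) * C1) + (int m + 1) * ((int m - 2*int r') * C0)"
    by (intro add_mono mult_left_mono hX hY) auto
  also have "\<dots> = (int m - 2*int r' - 2) * ((int m + 1) * C1) + (int m - 2*int r') * ((int m + 1) * C0)"
    by (simp add: algebra_simps)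
  also have "\<dots> = int m * ((int m + 1 - 2*(int r' + 1)) * B)"
    unfolding I1 I2 by (simp add: algebra_simps)
  finally show ?thesis using m by simp
qed

lemma comb_step_strict:
  fixes m r' :: nat and X Y K B C1 C0 :: int
  assumes m: "m > 0"
    and K: "\<bar>K\<bar> \<le> \<bar>X\<bar> + \<bar>Y\<bar>"
    and hX: "int m * \<bar>X\<bar> \<le> (int m - 2*int r' - 2) * C1"
    and hY: "int m * \<bar>Y\<bar> < (int m - 2*int r') * C0"
    and I1: "(int m + 1) * C1 = (int m - int r') * B"
    and I2: "(int m + 1) * C0 = (int r' + 1) * B"
  shows "(int m + 1) * \<bar>K\<bar> < (int m + 1 - 2*(int r' + 1)) * B"
proof -
  have p: "int m * (int m + 1) \<ge> 0" by simp
  have "int m * ((int m + 1) * \<bar>K\<bar>) = (int m * (int m + 1)) * \<bar>K\<bar>" by (simp add: algebra_simps)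
  also have "\<dots> \<le> (int m * (int m + 1)) * (\<bar>X\<bar> + \<bar>Y\<bar>)" by (rule mult_left_mono[OF K p])
  also have "\<dots> = (int m + 1) * (int m * \<bar>X\<bar>) + (int m + 1) * (int m * \<bar>Y\<bar>)" by (simp add: algebra_simps)
  also have "\<dots> < (int m + 1) * ((int m - 2*int r' - 2) * C1) + (int m + 1) * ((int m - 2*int r') * C0)"
    by (intro add_le_less_mono mult_left_mono hX mult_strict_left_mono hY) auto
  also have "\<dots> = (int m - 2*int r' - 2) * ((int m + 1) * C1) + (int m - 2*int r') * ((int m + 1) * C0)"
    by (simp add: algebra_simps)
  also have "\<dots> = int m * ((int m + 1 - 2*(int r' + 1)) * B)"
    unfolding I1 I2 by (simp add: algebra_simps)
  finally show ?thesis using m by simp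
qed

lemma binom_I1: "(int m + 1) * int (m choose Suc r') = (int m - int r') * int (Suc m choose Suc r')"
proof -
  have e: "(Suc m - Suc r') * (Suc m choose Suc r') = Suc m * (m choose Suc r')"
    by (metis binomial_absorb_comp diff_Suc_1)
  hence e2: "int (Suc m - Suc r') * int (Suc m choose Suc r') = int (Suc m) * int (m choose Suc r')"
    by (metis of_nat_mult)
  show ?thesis
  proof (cases "r' \<le> m")
    case True
    hence "int (Suc m - Suc r') = int m - int r'" by simp
    thus ?thesis using e2 by (simp del: binomial_Suc_Suc)
  next
    case False
    hence z1: "(m choose Suc r') = 0" and z2: "(Suc m choose Suc r') = 0" by (simp_all del: binomial_Suc_Suc)
    show ?thesis by (simp only: z1 z2 of_nat_0 mult_zero_right)
  qed
qed

lemma binom_I2: "(int m + 1) * int (m choose r') = (int r' + 1) * int (Suc m choose Suc r')"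
proof -
  have "int (Suc m * (m choose r')) = int ((Suc m choose Suc r') * Suc r')"
    using Suc_times_binomial_eq[of m r'] by simp
  thus ?thesis by (simp add: of_nat_mult algebra_simps)
qed

lemma KR_N:
  "finite U \<Longrightarrow> card U = n \<Longrightarrow> a \<subseteq> U \<Longrightarrow> 2*r < n \<Longrightarrow> 1 \<le> card a \<Longrightarrow> card a < n \<Longrightarrow>
   int n * \<bar>KR U a r\<bar> \<le> (int n - 2*int r) * int (n choose r)"
proof (induction n arbitrary: U a r)
  case 0 thus ?case by simp
next
  case (Suc m)
  show ?case
  proof (cases r)
    case 0 thus ?thesis using Suc.prems by (simp add: KR_0)
  next
    case (Suc r')
    note r = this
    have fU: "finite U" and cU: "card U = Suc m" and aU: "a \<subseteq> U" using Suc.prems by auto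
    have fa: "finite a" using aU fU finite_subset by blast
    define w where "w = card a"
    have w1: "1 \<le> w" "w < Suc m" using Suc.prems w_def by auto
    let ?B = "int (Suc m choose Suc r')"
    show ?thesis
    proof (cases "2 * r + 2 \<le> Suc m")
      case True
      have "\<exists>p\<in>U. 1 \<le> card (a - {p}) \<and> card (a - {p}) < m"
      proof (cases "w + 2 \<le> Suc m")
        case True
        have "a \<subset> U" using aU w1 cU w_def by auto
        then obtain p where "p \<in> U" "p \<notin> a" by blast
        thus ?thesis using True w1 w_def by (intro bexI[of _ p]) auto
      next
        case False
        hence "w = m" using w1 by simp
        have "a \<noteq> {}" using w1 w_def by auto
        then obtain p where "p \<in> a" by blast
        hence "card (a - {p}) = m - 1" using \<open>w = m\<close> w_def fa by simp
        moreover have "m \<ge> 2" using True r by simp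
        ultimately show ?thesis using \<open>p \<in> a\<close> aU by (intro bexI[of _ p]) auto
      qed
      then obtain p where p: "p \<in> U" and ca': "1 \<le> card (a - {p})" "card (a - {p}) < m" by blast
      let ?U' = "U - {p}" and ?a' = "a - {p}"
      have fU': "finite ?U'" and cU': "card ?U' = m" and aU': "?a' \<subseteq> ?U'" using fU cU p aU by auto
      define X where "X = KR ?U' ?a' (Suc r')"
      define Y where "Y = KR ?U' ?a' r'"
      have rec: "KR U a r = X + (if p \<in> a then -1 else 1) * Y"
        unfolding r X_def Y_def by (rule KR_rec[OF fU p])
      have K: "\<bar>KR U a r\<bar> \<le> \<bar>X\<bar> + \<bar>Y\<bar>" unfolding rec by (cases "p \<in> a") auto
      have hX: "int m * \<bar>X\<bar> \<le> (int m - 2*int r' - 2) * int (m choose Suc r')"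
        using Suc.IH[of ?U' ?a' "Suc r'", OF fU' cU' aU' _ ca'] True r unfolding X_def by (simp add: algebra_simps)
      have hY: "int m * \<bar>Y\<bar> \<le> (int m - 2*int r') * int (m choose r')"
        using Suc.IH[of ?U' ?a' "r'", OF fU' cU' aU' _ ca'] True r unfolding Y_def by simp
      have "(int m + 1) * \<bar>KR U a r\<bar> \<le> (int m + 1 - 2*(int r' + 1)) * ?B"
        by (rule comb_step[OF _ K hX hY binom_I1 binom_I2]) (use True r in simp)
      thus ?thesis using r by (simp del: binomial_Suc_Suc add: ac_simps)
    next
      case False
      hence n: "Suc m = 2 * r + 1" using Suc.prems by simp
      have "\<exists>p\<in>U. (p \<in> a \<longleftrightarrow> even w)"
      proof (cases "even w")
        case True
        have "a \<noteq> {}" using w1 w_def by auto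
        thus ?thesis using True aU by blast
      next
        case False
        have "a \<subset> U" using aU w1 cU w_def by auto
        thus ?thesis using False by blast
      qed
      then obtain p where p: "p \<in> U" and pa: "p \<in> a \<longleftrightarrow> even w" by blast
      let ?U' = "U - {p}" and ?a' = "a - {p}"
      have fU': "finite ?U'" and cU': "card ?U' = m" and aU': "?a' \<subseteq> ?U'" using fU cU p aU by auto
      define X where "X = KR ?U' ?a' (Suc r')"
      define Y where "Y = KR ?U' ?a' r'"
      define X2 where "X2 = KR ?U' ?a' (Suc (Suc r'))"
      define \<sigma> :: int where "\<sigma> = (if p \<in> a then -1 else 1)"
      have rec1: "KR U a r = X + \<sigma> * Y"
        unfolding r X_def Y_def \<sigma>_def by (rule KR_rec[OF fU p])
      have rec2: "KR U a (Suc r) = X2 + \<sigma> * X"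
        unfolding r X_def X2_def \<sigma>_def by (rule KR_rec[OF fU p])
      have c1: "KR U a (Suc r) = (-1)^w * KR U a r"
        using KR_compl[OF fU aU, of r] cU n w_def by simp
      have c2: "X2 = (-1)^card ?a' * Y"
        using KR_compl[OF fU' aU', of r'] cU' n r unfolding X2_def Y_def
        by (simp add: numeral_eq_Suc)
      have wa': "card ?a' = (if p \<in> a then w - 1 else w)" using fa w_def by simp
      have KY: "\<bar>KR U a r\<bar> = \<bar>Y\<bar>"
      proof (cases "p \<in> a")
        case True
        hence ev: "even w" using pa by simp
        hence od: "odd (w - 1)" using w1 by simp
        have "X + - Y = - Y + - X" using c1 rec1 rec2 c2 True ev od wa' \<sigma>_def by simp
        hence "X = 0" by simp
        thus ?thesis using rec1 True \<sigma>_def by simp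
      next
        case False
        hence od: "odd w" using pa by simp
        have "- (X + Y) = - Y + X" using c1 rec1 rec2 c2 False od wa' \<sigma>_def by simp
        hence "X = 0" by simp
        thus ?thesis using rec1 False \<sigma>_def by simp
      qed
      have ca': "1 \<le> card ?a'" "card ?a' < m"
      proof -
        show "1 \<le> card ?a'"
        proof (cases "p \<in> a")
          case True thus ?thesis using wa' pa w1 by (cases "w = 1") auto
        next
          case False thus ?thesis using wa' w1 by simp
        qed
        show "card ?a' < m"
        proof (cases "p \<in> a")
          case True thus ?thesis using wa' w1 by simp
        next
          case False
          hence "odd w" using pa by simp
          hence "w \<noteq> m" using n by auto
          thus ?thesis using False wa' w1 by simp
        qed
      qed
      have hY: "int m * \<bar>Y\<bar> \<le> (int m - 2*int r') * int (m choose r')"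
        using Suc.IH[of ?U' ?a' "r'", OF fU' cU' aU' _ ca'] n r unfolding Y_def by simp
      hence "int m * \<bar>Y\<bar> \<le> 2 * int (m choose r')" using n r by simp
      hence "2 * ((int r' + 1) * \<bar>Y\<bar>) \<le> 2 * int (m choose r')" using n r by (simp add: algebra_simps)
      hence h2: "(int r' + 1) * \<bar>Y\<bar> \<le> int (m choose r')" by linarith
      have "(int r' + 1) * ((int m + 1) * \<bar>Y\<bar>) = (int m + 1) * ((int r' + 1) * \<bar>Y\<bar>)" by (simp add: algebra_simps)
      also have "\<dots> \<le> (int m + 1) * int (m choose r')" by (rule mult_left_mono[OF h2]) simp
      also have "\<dots> = (int r' + 1) * ?B" by (rule binom_I2)
      finally have "(int m + 1) * \<bar>Y\<bar> \<le> ?B" by simp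
      thus ?thesis using KY n r by simp
    qed
  qed
qed

lemma KR_S:
  "finite U \<Longrightarrow> card U = n \<Longrightarrow> a \<subseteq> U \<Longrightarrow> 1 \<le> r \<Longrightarrow> 2*r + 2 \<le> n \<Longrightarrow> 2 \<le> card a \<Longrightarrow> card a + 2 \<le> n \<Longrightarrow>
   int n * \<bar>KR U a r\<bar> < (int n - 2*int r) * int (n choose r)"
proof (induction n arbitrary: U a r)
  case 0 thus ?case by simp
next
  case (Suc m)
  obtain r' where r: "r = Suc r'" using Suc.prems by (cases r) auto
  have fU: "finite U" and cU: "card U = Suc m" and aU: "a \<subseteq> U" using Suc.prems by auto
  have fa: "finite a" using aU fU finite_subset by blast
  define w where "w = card a"
  have w1: "2 \<le> w" "w + 2 \<le> Suc m" using Suc.prems w_def by auto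
  show ?case
  proof (cases "r' = 0")
    case True
    hence "KR U a r = int (Suc m) - 2 * int w" using KR_1[OF fU aU] r cU w_def by simp
    moreover have "\<bar>int (Suc m) - 2 * int w\<bar> < int (Suc m) - 2" using w1 by linarith
    ultimately have "\<bar>KR U a r\<bar> < int (Suc m) - 2" by simp
    hence "int (Suc m) * \<bar>KR U a r\<bar> < int (Suc m) * (int (Suc m) - 2)"
      by (intro mult_strict_left_mono) auto
    thus ?thesis using True r by (simp add: ac_simps)
  next
    case False
    let ?B = "int (Suc m choose Suc r')"
    have "\<exists>p\<in>U. 2 \<le> card (a - {p}) \<and> card (a - {p}) + 2 \<le> m"
    proof (cases "w + 3 \<le> Suc m")
      case True
      have "a \<subset> U" using aU w1 cU w_def by auto
      then obtain p where "p \<in> U" "p \<notin> a" by blast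
      thus ?thesis using True w1 w_def by (intro bexI[of _ p]) auto
    next
      case False
      hence "w + 2 = Suc m" using w1 by simp
      have "a \<noteq> {}" using w1 w_def by auto
      then obtain p where "p \<in> a" by blast
      hence "card (a - {p}) = w - 1" using w_def fa by simp
      moreover have "m \<ge> 5" using Suc.prems r \<open>r' \<noteq> 0\<close> by simp
      ultimately show ?thesis using \<open>p \<in> a\<close> aU \<open>w + 2 = Suc m\<close> by (intro bexI[of _ p]) auto
    qed
    then obtain p where p: "p \<in> U" and ca': "2 \<le> card (a - {p})" "card (a - {p}) + 2 \<le> m" by blast
    let ?U' = "U - {p}" and ?a' = "a - {p}"
    have fU': "finite ?U'" and cU': "card ?U' = m" and aU': "?a' \<subseteq> ?U'" using fU cU p aU by auto
    define X where "X = KR ?U' ?a' (Suc r')"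
    define Y where "Y = KR ?U' ?a' r'"
    have rec: "KR U a r = X + (if p \<in> a then -1 else 1) * Y"
      unfolding r X_def Y_def by (rule KR_rec[OF fU p])
    have K: "\<bar>KR U a r\<bar> \<le> \<bar>X\<bar> + \<bar>Y\<bar>" unfolding rec by (cases "p \<in> a") auto
    have hX: "int m * \<bar>X\<bar> \<le> (int m - 2*int r' - 2) * int (m choose Suc r')"
      using KR_N[of ?U' m ?a' "Suc r'", OF fU' cU' aU'] ca' Suc.prems r unfolding X_def by (simp add: algebra_simps)
    have hY: "int m * \<bar>Y\<bar> < (int m - 2*int r') * int (m choose r')"
      using Suc.IH[of ?U' ?a' "r'", OF fU' cU' aU' _ _ ca'] False Suc.prems r unfolding Y_def by simp
    have "(int m + 1) * \<bar>KR U a r\<bar> < (int m + 1 - 2*(int r' + 1)) * ?B"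
      by (rule comb_step_strict[OF _ K hX hY binom_I1 binom_I2]) (use Suc.prems r in simp)
    thus ?thesis using r by (simp del: binomial_Suc_Suc add: ac_simps)
  qed
qed

definition symd :: "nat set \<Rightarrow> nat set \<Rightarrow> nat set" where
  "symd x y = (x - y) \<union> (y - x)"

definition chi :: "nat set \<Rightarrow> nat set \<Rightarrow> real" where
  "chi a x = (-1)^card (a \<inter> x)"

lemma card_symd:
  assumes "finite x" "finite y"
  shows "card (symd x y) + 2 * card (x \<inter> y) = card x + card y"
proof -
  have d: "(x - y) \<inter> (y - x) = {}" by blast
  have "card (symd x y) = card (x - y) + card (y - x)"
    unfolding symd_def using assms d by (simp add: card_Un_disjoint)
  moreover have "card (x - y) = card x - card (x \<inter> y)" using assms by (simp add: card_Diff_subset_Int)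
  moreover have "card (y - x) = card y - card (x \<inter> y)" using assms
    by (simp add: card_Diff_subset_Int Int_commute)
  moreover have "card (x \<inter> y) \<le> card x" "card (x \<inter> y) \<le> card y" using assms by (simp_all add: card_mono)
  ultimately show ?thesis by simp
qed

lemma neg1_symd:
  assumes "finite x" "finite y"
  shows "(-1::real)^card (symd x y) = (-1)^card x * (-1)^card y"
proof -
  have "(-1::real)^card (symd x y) = (-1)^(card (symd x y) + 2 * card (x \<inter> y))"
    by (simp add: power_add power_mult)
  also have "\<dots> = (-1)^(card x + card y)" using card_symd[OF assms] by simp
  finally show ?thesis by (simp add: power_add)
qed

lemma even_symd:
  assumes "finite x" "finite y"
  shows "even (card (symd x y)) \<longleftrightarrow> (even (card x) \<longleftrightarrow> even (card y))"
  using card_symd[OF assms] by (metis even_add even_mult_iff even_numeral)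

lemma chi_comm: "chi a x = chi x a"
  unfolding chi_def by (simp add: Int_commute)

lemma chi_symd:
  assumes "finite a"
  shows "chi a (symd x y) = chi a x * chi a y"
proof -
  have "a \<inter> symd x y = symd (a \<inter> x) (a \<inter> y)" unfolding symd_def by blast
  thus ?thesis unfolding chi_def using assms neg1_symd[of "a \<inter> x" "a \<inter> y"] by simp
qed

lemma chi_symd_left:
  assumes "finite x"
  shows "chi (symd a b) x = chi a x * chi b x"
  using chi_symd[OF assms] chi_comm by metis

lemma chi_empty [simp]: "chi a {} = 1" "chi {} x = 1" unfolding chi_def by simp_all

lemma symd_empty [simp]: "symd x {} = x" "symd {} x = x" unfolding symd_def by auto

lemma symd_symd: "symd (symd x d) d = x" unfolding symd_def by blast

lemma symd_eq_empty: "symd (symd x y) t = {} \<longleftrightarrow> y = symd x t" unfolding symd_def by blast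

lemma symd_sub: "x \<subseteq> U \<Longrightarrow> y \<subseteq> U \<Longrightarrow> symd x y \<subseteq> U" unfolding symd_def by blast

lemma sum_involution_zero:
  fixes f :: "'a \<Rightarrow> real"
  assumes fin: "finite A" and m: "\<And>x. x \<in> A \<Longrightarrow> \<phi> x \<in> A" and i: "\<And>x. x \<in> A \<Longrightarrow> \<phi> (\<phi> x) = x"
    and neg: "\<And>x. x \<in> A \<Longrightarrow> f (\<phi> x) = - f x"
  shows "sum f A = 0"
proof -
  have b: "bij_betw \<phi> A A" by (rule bij_betw_byWitness[where f'=\<phi>]) (use m i in auto)
  have "sum f A = sum (\<lambda>x. f (\<phi> x)) A" using sum.reindex_bij_betw[OF b, of f] by simp
  also have "\<dots> = - sum f A" using neg by (simp add: sum_negf)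
  finally show ?thesis by simp
qed

lemma H_verts_finite: "finite (H_verts n)"
  unfolding H_verts_def by (rule finite_subset[of _ "Pow {0..<n}"]) auto

lemma H_verts_symd: "x \<in> H_verts n \<Longrightarrow> y \<in> H_verts n \<Longrightarrow> symd x y \<in> H_verts n"
  unfolding H_verts_def using even_symd symd_sub by (auto intro: finite_subset)

lemma orth_V:
  assumes c: "c \<subseteq> {0..<n}" "c \<noteq> {}" "c \<noteq> {0..<n}"
  shows "(\<Sum>x\<in>H_verts n. chi c x) = 0"
proof -
  obtain i where i: "i \<in> c" using c by blast
  obtain j where j: "j \<in> {0..<n}" "j \<notin> c" using c by blast
  have ij: "i \<noteq> j" using i j by blast
  have d: "{i, j} \<in> H_verts n" using i j c ij unfolding H_verts_def by auto
  have fc: "finite c" using c finite_subset by blast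
  have cij: "chi c {i,j} = -1" proof -
    have "c \<inter> {i,j} = {i}" using i j by blast
    thus ?thesis unfolding chi_def by simp
  qed
  show ?thesis
  proof (rule sum_involution_zero[where \<phi>="\<lambda>x. symd x {i,j}"])
    show "finite (H_verts n)" by (rule H_verts_finite)
    fix x assume x: "x \<in> H_verts n"
    show "symd x {i, j} \<in> H_verts n" by (rule H_verts_symd[OF x d])
    show "symd (symd x {i, j}) {i, j} = x" by (rule symd_symd)
    show "chi c (symd x {i, j}) = - chi c x" using chi_symd[OF fc] cij by simp
  qed
qed

lemma orth_Pow:
  assumes c: "c \<subseteq> {0..<n}" "c \<noteq> {}"
  shows "(\<Sum>a\<in>Pow {0..<n}. chi a c) = 0"
proof -
  obtain i where i: "i \<in> c" using c by blast
  have fc: "finite c" using c finite_subset by blast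
  have ci: "chi {i} c = -1" using i unfolding chi_def by simp
  show ?thesis
  proof (rule sum_involution_zero[where \<phi>="\<lambda>a. symd a {i}"])
    show "finite (Pow {0..<n})" by simp
    fix a assume a: "a \<in> Pow {0..<n}"
    show "symd a {i} \<in> Pow {0..<n}" using a i c unfolding symd_def by auto
    show "symd (symd a {i}) {i} = a" by (rule symd_symd)
    show "chi (symd a {i}) c = - chi a c" using chi_symd_left[OF fc] ci by simp
  qed
qed

lemma dual_Pow:
  assumes c: "c \<subseteq> {0..<n}"
  shows "(\<Sum>a\<in>Pow {0..<n}. chi a c) = (if c = {} then real (card (Pow {0..<n})) else 0)"
  using orth_Pow[OF c] by auto

definition ghat :: "nat \<Rightarrow> (nat set \<Rightarrow> real) \<Rightarrow> nat set \<Rightarrow> real" where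
  "ghat n g a = (\<Sum>x\<in>H_verts n. g x * chi a x)"

lemma parseval_gen:
  assumes T: "T \<subseteq> H_verts n"
  shows "(\<Sum>a\<in>Pow {0..<n}. (ghat n g a)^2 * (\<Sum>t\<in>T. chi a t))
       = real (card (Pow {0..<n})) * (\<Sum>x\<in>H_verts n. \<Sum>t\<in>T. g x * g (symd x t))"
proof -
  let ?V = "H_verts n" and ?P = "Pow {0..<n}" and ?N = "real (card (Pow {0..<n}))"
  have fV: "finite ?V" by (rule H_verts_finite)
  have fT: "finite T" using T fV finite_subset by blast
  have Vsub: "\<And>x. x \<in> ?V \<Longrightarrow> x \<subseteq> {0..<n}" unfolding H_verts_def by auto
  have step1: "\<And>a. a \<in> ?P \<Longrightarrow> (ghat n g a)^2 * (\<Sum>t\<in>T. chi a t)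
      = (\<Sum>x\<in>?V. \<Sum>y\<in>?V. \<Sum>t\<in>T. g x * g y * chi a (symd (symd x y) t))"
  proof -
    fix a assume a: "a \<in> ?P"
    have fa: "finite a" using a finite_subset by auto
    have "(ghat n g a)^2 * (\<Sum>t\<in>T. chi a t)
        = (\<Sum>x\<in>?V. \<Sum>y\<in>?V. \<Sum>t\<in>T. (g x * chi a x) * (g y * chi a y) * chi a t)"
    proof -
      have "(ghat n g a)^2 = (\<Sum>x\<in>?V. \<Sum>y\<in>?V. (g x * chi a x) * (g y * chi a y))"
        unfolding ghat_def power2_eq_square sum_product by simp
      hence "(ghat n g a)^2 * (\<Sum>t\<in>T. chi a t) = (\<Sum>x\<in>?V. \<Sum>y\<in>?V. (g x * chi a x) * (g y * chi a y) * (\<Sum>t\<in>T. chi a t))"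
        by (simp add: sum_distrib_right)
      thus ?thesis by (simp add: sum_distrib_left)
    qed
    also have "\<dots> = (\<Sum>x\<in>?V. \<Sum>y\<in>?V. \<Sum>t\<in>T. g x * g y * chi a (symd (symd x y) t))"
      by (simp add: chi_symd[OF fa] mult_ac)
    finally show "(ghat n g a)^2 * (\<Sum>t\<in>T. chi a t)
      = (\<Sum>x\<in>?V. \<Sum>y\<in>?V. \<Sum>t\<in>T. g x * g y * chi a (symd (symd x y) t))" .
  qed
  have "(\<Sum>a\<in>?P. (ghat n g a)^2 * (\<Sum>t\<in>T. chi a t))
      = (\<Sum>a\<in>?P. \<Sum>x\<in>?V. \<Sum>y\<in>?V. \<Sum>t\<in>T. g x * g y * chi a (symd (symd x y) t))"
    using step1 by (rule sum.cong[OF refl])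
  also have "\<dots> = (\<Sum>x\<in>?V. \<Sum>y\<in>?V. \<Sum>t\<in>T. \<Sum>a\<in>?P. g x * g y * chi a (symd (symd x y) t))"
    by (subst sum.swap, rule sum.cong[OF refl], subst sum.swap, rule sum.cong[OF refl], subst sum.swap, rule refl)
  also have "\<dots> = (\<Sum>x\<in>?V. \<Sum>y\<in>?V. \<Sum>t\<in>T. g x * g y * (if y = symd x t then ?N else 0))"
  proof (intro sum.cong[OF refl])
    fix x y t assume x: "x \<in> ?V" and y: "y \<in> ?V" and t: "t \<in> T"
    have "symd (symd x y) t \<subseteq> {0..<n}" using x y t T Vsub by (meson symd_sub subsetD)
    hence "(\<Sum>a\<in>?P. chi a (symd (symd x y) t)) = (if y = symd x t then ?N else 0)"
      using dual_Pow symd_eq_empty by presburger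
    thus "(\<Sum>a\<in>?P. g x * g y * chi a (symd (symd x y) t)) = g x * g y * (if y = symd x t then ?N else 0)"
      by (simp add: sum_distrib_left[symmetric])
  qed
  also have "\<dots> = (\<Sum>x\<in>?V. \<Sum>t\<in>T. \<Sum>y\<in>?V. g x * g y * (if y = symd x t then ?N else 0))"
    by (rule sum.cong[OF refl], rule sum.swap)
  also have "\<dots> = (\<Sum>x\<in>?V. \<Sum>t\<in>T. ?N * (g x * g (symd x t)))"
  proof (intro sum.cong[OF refl])
    fix x t assume x: "x \<in> ?V" and t: "t \<in> T"
    have "symd x t \<in> ?V" using H_verts_symd x t T by blast
    thus "(\<Sum>y\<in>?V. g x * g y * (if y = symd x t then ?N else 0)) = ?N * (g x * g (symd x t))"
      using fV by (simp add: if_distrib[of "\<lambda>z. g x * g _ * z"] sum.delta' cong: if_cong)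
  qed
  also have "\<dots> = ?N * (\<Sum>x\<in>?V. \<Sum>t\<in>T. g x * g (symd x t))"
    by (simp add: sum_distrib_left)
  finally show ?thesis .
qed

lemma inversion:
  assumes x: "x \<in> H_verts n"
  shows "(\<Sum>a\<in>Pow {0..<n}. ghat n g a * chi a x) = real (card (Pow {0..<n})) * g x"
proof -
  let ?V = "H_verts n" and ?P = "Pow {0..<n}" and ?N = "real (card (Pow {0..<n}))"
  have fV: "finite ?V" by (rule H_verts_finite)
  have Vsub: "\<And>x. x \<in> ?V \<Longrightarrow> x \<subseteq> {0..<n}" unfolding H_verts_def by auto
  have "(\<Sum>a\<in>?P. ghat n g a * chi a x) = (\<Sum>a\<in>?P. \<Sum>y\<in>?V. g y * chi a (symd y x))"
  proof (rule sum.cong[OF refl])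
    fix a assume a: "a \<in> ?P"
    have fa: "finite a" using a finite_subset by auto
    show "ghat n g a * chi a x = (\<Sum>y\<in>?V. g y * chi a (symd y x))"
      unfolding ghat_def sum_distrib_right by (simp add: chi_symd[OF fa] mult_ac)
  qed
  also have "\<dots> = (\<Sum>y\<in>?V. \<Sum>a\<in>?P. g y * chi a (symd y x))" by (rule sum.swap)
  also have "\<dots> = (\<Sum>y\<in>?V. g y * (if y = x then ?N else 0))"
  proof (rule sum.cong[OF refl])
    fix y assume y: "y \<in> ?V"
    have "symd y x \<subseteq> {0..<n}" using x y Vsub symd_sub by blast
    moreover have "symd y x = {} \<longleftrightarrow> y = x" unfolding symd_def by blast
    ultimately show "(\<Sum>a\<in>?P. g y * chi a (symd y x)) = g y * (if y = x then ?N else 0)"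
      using dual_Pow[of "symd y x" n] by (simp add: sum_distrib_left[symmetric])
  qed
  also have "\<dots> = ?N * g x" using x fV by (simp add: if_distrib sum.delta' cong: if_cong)
  finally show ?thesis .
qed

lemma empty_in_V: "{} \<in> H_verts n" unfolding H_verts_def by simp

lemma card_Pow_pos: "real (card (Pow {0..<(n::nat)})) > 0"
proof -
  have "finite {0..<n}" by simp
  hence "card (Pow {0..<n}) = 2 ^ card {0..<n}" by (rule card_Pow)
  thus ?thesis by simp
qed

lemma spectral:
  fixes lam :: real
  assumes T: "T \<subseteq> H_verts n"
    and th: "\<And>a. a \<in> Pow {0..<n} \<Longrightarrow> lam \<le> (\<Sum>t\<in>T. chi a t)"
  shows "lam * (\<Sum>x\<in>H_verts n. g x * g x) \<le> (\<Sum>x\<in>H_verts n. \<Sum>t\<in>T. g x * g (symd x t))"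
    and "(\<Sum>x\<in>H_verts n. \<Sum>t\<in>T. g x * g (symd x t)) = lam * (\<Sum>x\<in>H_verts n. g x * g x) \<Longrightarrow>
         a \<in> Pow {0..<n} \<Longrightarrow> lam < (\<Sum>t\<in>T. chi a t) \<Longrightarrow> ghat n g a = 0"
proof -
  let ?P = "Pow {0..<n}" and ?N = "real (card (Pow {0..<n}))"
  let ?Q = "(\<Sum>x\<in>H_verts n. \<Sum>t\<in>T. g x * g (symd x t))"
  let ?G = "(\<Sum>x\<in>H_verts n. g x * g x)"
  have p1: "(\<Sum>a\<in>?P. (ghat n g a)^2 * (\<Sum>t\<in>T. chi a t)) = ?N * ?Q"
    by (rule parseval_gen[OF T])
  have p0: "(\<Sum>a\<in>?P. (ghat n g a)^2 * (\<Sum>t\<in>{{}}. chi a t)) = ?N * (\<Sum>x\<in>H_verts n. \<Sum>t\<in>{{}}. g x * g (symd x t))"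
    by (rule parseval_gen) (simp add: empty_in_V)
  hence p0': "(\<Sum>a\<in>?P. (ghat n g a)^2) = ?N * ?G" by simp
  have key: "?N * (?Q - lam * ?G) = (\<Sum>a\<in>?P. (ghat n g a)^2 * ((\<Sum>t\<in>T. chi a t) - lam))"
  proof -
    have "(\<Sum>a\<in>?P. (ghat n g a)^2 * ((\<Sum>t\<in>T. chi a t) - lam))
        = (\<Sum>a\<in>?P. (ghat n g a)^2 * (\<Sum>t\<in>T. chi a t) - (ghat n g a)^2 * lam)"
      by (simp only: right_diff_distrib)
    also have "\<dots> = (\<Sum>a\<in>?P. (ghat n g a)^2 * (\<Sum>t\<in>T. chi a t)) - (\<Sum>a\<in>?P. (ghat n g a)^2) * lam"
      by (simp only: sum_subtractf sum_distrib_right)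
    also have "\<dots> = ?N * ?Q - (?N * ?G) * lam" by (simp only: p1 p0')
    also have "\<dots> = ?N * (?Q - lam * ?G)" by (simp only: right_diff_distrib mult.commute mult.left_commute)
    finally show ?thesis by simp
  qed
  have nn: "\<And>a. a \<in> ?P \<Longrightarrow> 0 \<le> (ghat n g a)^2 * ((\<Sum>t\<in>T. chi a t) - lam)"
    using th by simp
  have "0 \<le> ?N * (?Q - lam * ?G)" unfolding key by (rule sum_nonneg) (rule nn)
  hence h0: "?N * 0 \<le> ?N * (?Q - lam * ?G)" by (simp only: mult_zero_right)
  have "0 \<le> ?Q - lam * ?G" by (rule mult_le_cancel_left_pos[OF card_Pow_pos[of n], THEN iffD1, OF h0])
  thus "lam * ?G \<le> ?Q" by simp
  assume eq: "?Q = lam * ?G" and a: "a \<in> ?P" and lt: "lam < (\<Sum>t\<in>T. chi a t)"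
  have "(\<Sum>a\<in>?P. (ghat n g a)^2 * ((\<Sum>t\<in>T. chi a t) - lam)) = 0"
    using key eq by simp
  moreover have fP: "finite ?P" by simp
  ultimately have "\<forall>a\<in>?P. (ghat n g a)^2 * ((\<Sum>t\<in>T. chi a t) - lam) = 0"
    by (simp only: sum_nonneg_eq_0_iff[OF fP nn])
  hence "(ghat n g a)^2 * ((\<Sum>t\<in>T. chi a t) - lam) = 0" using a by blast
  thus "ghat n g a = 0" using lt by simp
qed

definition Sk :: "nat \<Rightarrow> nat \<Rightarrow> nat set set" where
  "Sk n k = {s. s \<subseteq> {0..<n} \<and> card s = k}"

lemma Sk_V: "even k \<Longrightarrow> Sk n k \<subseteq> H_verts n"
  unfolding Sk_def H_verts_def by auto

lemma theta_KR: "(\<Sum>t\<in>Sk n k. chi a t) = real_of_int (KR {0..<n} a k)"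
proof -
  have "\<And>t. chi a t = real_of_int ((-1)^card (t \<inter> a))" unfolding chi_def by (metis Int_commute of_int_1 of_int_minus of_int_power)
  thus ?thesis unfolding KR_def Sk_def by (simp add: of_int_sum)
qed

lemma theta_bounds:
  assumes a: "a \<subseteq> {0..<n}" and k: "even k" "n + 2 \<le> 2 * k" "k \<le> n - 1"
  shows "real (n choose k) * (real n - 2 * real k) / real n \<le> (\<Sum>t\<in>Sk n k. chi a t)"
    and "card a \<noteq> 1 \<Longrightarrow> card a \<noteq> n - 1 \<Longrightarrow>
         real (n choose k) * (real n - 2 * real k) / real n < (\<Sum>t\<in>Sk n k. chi a t)"
proof -
  define U where "U = {0..<n}"
  have fU: "finite U" and cU: "card U = n" and aU: "a \<subseteq> U" using a U_def by auto
  have n5: "n \<ge> 5" using k by presburger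
  define r where "r = n - k"
  have kr: "k = n - r" "r \<le> n" using k r_def by auto
  have r1: "1 \<le> r" "2 * r + 2 \<le> n" using k r_def by auto
  have Cnk: "(n choose r) = (n choose k)" using kr binomial_symmetric by metis
  have npos: "real n > 0" using n5 by simp
  define C where "C = (n choose k)"
  have Cpos: "C > 0" using k unfolding C_def by simp
  have fa: "finite a" using aU fU finite_subset by blast
  have gen: "int n * KR U a k \<ge> int C * (int n - 2 * int k) \<and>
      (card a \<noteq> 1 \<longrightarrow> card a \<noteq> n - 1 \<longrightarrow> int n * KR U a k > int C * (int n - 2 * int k))"
  proof (cases "card a = 0 \<or> card a = n")
    case True
    have "KR U a k = int C"
    proof (cases "card a = 0")
      case True
      hence "a = {}" using fa by simp
      thus ?thesis using KR_empty[OF fU] cU C_def by simp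
    next
      case False
      hence "a = U" using True aU fU cU by (metis card_subset_eq)
      have "KR U a k = (\<Sum>R\<in>{R. R \<subseteq> U \<and> card R = k}. 1)"
        unfolding KR_def by (rule sum.cong[OF refl]) (use \<open>a = U\<close> k in \<open>auto simp: Int_absorb2\<close>)
      thus ?thesis using n_subsets[OF fU, of k] cU C_def by simp
    qed
    moreover have "int n * int C > int C * (int n - 2 * int k)" using Cpos k by simp
    ultimately show ?thesis by simp
  next
    case False
    have w: "1 \<le> card a" "card a < n" using False card_mono[OF fU aU] cU by auto
    have c: "KR U a k = (-1)^card a * KR U a r"
      using KR_compl[OF fU aU, of r] cU kr by simp
    have N: "int n * \<bar>KR U a r\<bar> \<le> (int n - 2*int r) * int C"
      using KR_N[of U n a r, OF fU cU aU _ w] r1 Cnk C_def by simp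
    have e: "int n - 2 * int r = - (int n - 2 * int k)" using kr by simp
    have eN0: "int n = int k + int r" using kr by simp
    have eA: "(int n - 2 * int r) * int C = int C * int k - int C * int r" by (simp add: eN0 algebra_simps)
    have eB: "int C * (int n - 2 * int k) = int C * int r - int C * int k" by (simp add: eN0 algebra_simps)
    have abs0: "\<bar>KR U a k\<bar> = \<bar>KR U a r\<bar>" using c by (simp add: abs_mult)
    hence abs1: "int n * \<bar>KR U a k\<bar> = int n * \<bar>KR U a r\<bar>" by simp
    have "int n * KR U a k \<ge> - (int n * \<bar>KR U a k\<bar>)" by (simp add: abs_if)
    hence ge: "int n * KR U a k \<ge> int C * (int n - 2 * int k)" using N abs1 eA eB by linarith
    moreover
    { assume "card a \<noteq> 1" "card a \<noteq> n - 1"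
      hence w2: "2 \<le> card a" "card a + 2 \<le> n" using w by auto
      have "int n * \<bar>KR U a r\<bar> < (int n - 2*int r) * int C"
        using KR_S[OF fU cU aU r1 w2] Cnk C_def by simp
      hence "int n * KR U a k > int C * (int n - 2 * int k)"
        using \<open>int n * KR U a k \<ge> - (int n * \<bar>KR U a k\<bar>)\<close> abs1 eA eB by linarith }
    ultimately show ?thesis by blast
  qed
  have th: "(\<Sum>t\<in>Sk n k. chi a t) = real_of_int (KR U a k)" using theta_KR U_def by simp
  have conv: "\<And>z::int. (real C * (real n - 2 * real k) / real n \<le> real_of_int z \<longleftrightarrow> int C * (int n - 2 * int k) \<le> int n * z)"
  proof -
    fix z :: int
    have "real C * (real n - 2 * real k) / real n \<le> real_of_int z \<longleftrightarrow> real C * (real n - 2 * real k) \<le> real n * real_of_int z"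
      using npos by (simp add: divide_le_eq mult.commute)
    also have "\<dots> \<longleftrightarrow> real_of_int (int C * (int n - 2 * int k)) \<le> real_of_int (int n * z)" by simp
    also have "\<dots> \<longleftrightarrow> int C * (int n - 2 * int k) \<le> int n * z" by (rule of_int_le_iff)
    finally show "?thesis z" .
  qed
  have conv2: "\<And>z::int. (real C * (real n - 2 * real k) / real n < real_of_int z \<longleftrightarrow> int C * (int n - 2 * int k) < int n * z)"
  proof -
    fix z :: int
    have "real C * (real n - 2 * real k) / real n < real_of_int z \<longleftrightarrow> real C * (real n - 2 * real k) < real n * real_of_int z"
      using npos by (simp add: divide_less_eq mult.commute)
    also have "\<dots> \<longleftrightarrow> real_of_int (int C * (int n - 2 * int k)) < real_of_int (int n * z)" by simp
    also have "\<dots> \<longleftrightarrow> int C * (int n - 2 * int k) < int n * z" by (rule of_int_less_iff)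
    finally show "?thesis z" .
  qed
  show "real (n choose k) * (real n - 2 * real k) / real n \<le> (\<Sum>t\<in>Sk n k. chi a t)"
    using gen conv th C_def by simp
  show "card a \<noteq> 1 \<Longrightarrow> card a \<noteq> n - 1 \<Longrightarrow> real (n choose k) * (real n - 2 * real k) / real n < (\<Sum>t\<in>Sk n k. chi a t)"
    using gen conv2 th C_def by simp
qed

lemma hdist_symd: "hdist x y = card (symd x y)" unfolding hdist_def symd_def by simp

lemma chi_single: "chi {i} D = (if i \<in> D then -1 else 1)" unfolding chi_def by auto

lemma sum_chi_single:
  assumes D: "D \<subseteq> {0..<n}"
  shows "(\<Sum>i\<in>{0..<n}. chi {i} D) = real n - 2 * real (card D)"
proof -
  have "(\<Sum>i\<in>{0..<n}. chi {i} D) = (\<Sum>i\<in>{0..<n}. if i \<in> D then -1 else 1)"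
    by (simp add: chi_single)
  also have "\<dots> = - real (card ({0..<n} \<inter> D)) + real (card ({0..<n} - D))"
    by (simp add: sum.If_cases Diff_eq)
  also have "\<dots> = real n - 2 * real (card D)"
  proof -
    have "{0..<n} \<inter> D = D" using D by blast
    moreover have "card ({0..<n} - D) = n - card D" using D by (simp add: card_Diff_subset finite_subset)
    moreover have "card D \<le> n" using D by (metis card_atLeastLessThan card_mono finite_atLeastLessThan diff_zero)
    ultimately show ?thesis by (simp add: of_nat_diff)
  qed
  finally show ?thesis .
qed

lemma chi_compl:
  assumes x: "x \<in> H_verts n" and j: "j < n"
  shows "chi ({0..<n} - {j}) x = chi {j} x"
proof -
  have xs: "x \<subseteq> {0..<n}" and ev: "even (card x)" using x unfolding H_verts_def by auto
  have fx: "finite x" using xs finite_subset by blast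
  have "({0..<n} - {j}) \<inter> x = x - {j}" using xs by blast
  hence "chi ({0..<n} - {j}) x = (-1)^card (x - {j})" unfolding chi_def by simp
  also have "\<dots> = (if j \<in> x then -1 else 1)"
  proof (cases "j \<in> x")
    case True
    hence "card (x - {j}) = card x - 1" using fx by simp
    moreover have "card x \<ge> 1" using True fx card_0_eq by fastforce
    ultimately have "odd (card (x - {j}))" using ev by simp
    thus ?thesis using True by simp
  next
    case False thus ?thesis using ev by simp
  qed
  finally show ?thesis by (simp add: chi_single)
qed

lemma card_symd_le: "finite x \<Longrightarrow> finite y \<Longrightarrow> card (symd x y) \<le> card x + card y"
  using card_symd by fastforce

lemma symd_single_eq:
  assumes "p \<noteq> q"
  shows "symd (symd {j} {l}) {p, q} = {} \<longleftrightarrow> (j = p \<and> l = q) \<or> (j = q \<and> l = p)"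
  using assms unfolding symd_def by (auto simp: set_eq_iff)

lemma expansion:
  assumes n3: "n \<ge> 3"
    and z: "\<And>a. a \<in> Pow {0..<n} \<Longrightarrow> card a \<noteq> 1 \<Longrightarrow> card a \<noteq> n - 1 \<Longrightarrow> ghat n g a = 0"
    and x: "x \<in> H_verts n"
  shows "g x = (\<Sum>j\<in>{0..<n}. ((ghat n g {j} + ghat n g ({0..<n} - {j})) / real (card (Pow {0..<n}))) * chi {j} x)"
proof -
  let ?U = "{0..<n}" and ?N = "real (card (Pow {0..<n}))"
  let ?P1 = "(\<lambda>j. {j}) ` ?U" and ?P2 = "(\<lambda>j. ?U - {j}) ` ?U"
  have sub: "?P1 \<union> ?P2 \<subseteq> Pow ?U" by auto
  have out: "\<forall>a\<in>Pow ?U - (?P1 \<union> ?P2). ghat n g a * chi a x = 0"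
  proof
    fix a assume a: "a \<in> Pow ?U - (?P1 \<union> ?P2)"
    have c1: "card a \<noteq> 1"
    proof
      assume "card a = 1"
      then obtain j where "a = {j}" by (auto simp: card_Suc_eq)
      thus False using a by auto
    qed
    have c2: "card a \<noteq> n - 1"
    proof
      assume ca: "card a = n - 1"
      have aU: "a \<subseteq> ?U" using a by auto
      have "a \<noteq> ?U" using ca n3 by auto
      then obtain j where j: "j \<in> ?U" "j \<notin> a" using aU by blast
      have "a \<subseteq> ?U - {j}" using aU j by blast
      moreover have "card (?U - {j}) = n - 1" using j by simp
      ultimately have "a = ?U - {j}" using ca by (metis card_subset_eq finite_Diff finite_atLeastLessThan)
      thus False using a j by auto
    qed
    show "ghat n g a * chi a x = 0" using z[OF _ c1 c2] a by auto
  qed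
  have disj: "?P1 \<inter> ?P2 = {}"
  proof (rule ccontr)
    assume "?P1 \<inter> ?P2 \<noteq> {}"
    then obtain j j' where "j \<in> ?U" "j' \<in> ?U" "{j} = ?U - {j'}" by blast
    hence "card {j} = card (?U - {j'})" by simp
    thus False using \<open>j' \<in> ?U\<close> n3 by simp
  qed
  have inj1: "inj_on (\<lambda>j. {j}) ?U" by (rule inj_onI) auto
  have inj2: "inj_on (\<lambda>j. ?U - {j}) ?U"
  proof (rule inj_onI)
    fix j j' assume a: "j \<in> ?U" "j' \<in> ?U" "?U - {j} = ?U - {j'}"
    hence "j \<notin> ?U - {j'}" by blast
    thus "j = j'" using a(1) by blast
  qed
  have "?N * g x = (\<Sum>a\<in>Pow ?U. ghat n g a * chi a x)" using inversion[OF x] by simp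
  also have "\<dots> = (\<Sum>a\<in>?P1 \<union> ?P2. ghat n g a * chi a x)"
    by (rule sum.mono_neutral_right[OF _ sub out]) simp
  also have "\<dots> = (\<Sum>a\<in>?P1. ghat n g a * chi a x) + (\<Sum>a\<in>?P2. ghat n g a * chi a x)"
    by (rule sum.union_disjoint) (use disj in auto)
  also have "\<dots> = (\<Sum>j\<in>?U. ghat n g {j} * chi {j} x) + (\<Sum>j\<in>?U. ghat n g (?U - {j}) * chi (?U - {j}) x)"
    by (simp add: sum.reindex[OF inj1] sum.reindex[OF inj2])
  also have "\<dots> = (\<Sum>j\<in>?U. (ghat n g {j} + ghat n g (?U - {j})) * chi {j} x)"
    using chi_compl[OF x] by (simp add: sum.distrib distrib_right)
  finally have eqN: "?N * g x = (\<Sum>j\<in>?U. (ghat n g {j} + ghat n g (?U - {j})) * chi {j} x)" .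
  have N0: "?N \<noteq> 0" using card_Pow_pos[of n] by linarith
  have e: "g x = (\<Sum>j\<in>?U. (ghat n g {j} + ghat n g (?U - {j})) * chi {j} x) / ?N"
    unfolding eqN[symmetric] using N0 by (metis nonzero_mult_div_cancel_left)
  show ?thesis unfolding e sum_divide_distrib by (rule sum.cong[OF refl]) simp
qed

lemma double_delta:
  assumes "finite A" "p \<in> A" "q \<in> A"
  shows "(\<Sum>j\<in>A. \<Sum>l\<in>A. if j = p \<and> l = q then h j l else (0::real)) = h p q"
proof -
  have "\<And>j. (\<Sum>l\<in>A. if j = p \<and> l = q then h j l else 0) = (if j = p then h j q else 0)"
    using assms by (case_tac "j = p") (simp_all add: sum.delta')
  hence "(\<Sum>j\<in>A. \<Sum>l\<in>A. if j = p \<and> l = q then h j l else 0) = (\<Sum>j\<in>A. if j = p then h j q else 0)"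
    by simp
  also have "\<dots> = h p q" using assms by (simp add: sum.delta')
  finally show ?thesis .
qed

lemma dictator:
  fixes g :: "nat set \<Rightarrow> real" and c :: "nat \<Rightarrow> real"
  assumes n5: "n \<ge> 5"
    and sq: "\<And>x. x \<in> H_verts n \<Longrightarrow> g x * g x = 1"
    and ex: "\<And>x. x \<in> H_verts n \<Longrightarrow> g x = (\<Sum>j\<in>{0..<n}. c j * chi {j} x)"
  shows "\<exists>j0<n. \<forall>x\<in>H_verts n. \<forall>y\<in>H_verts n. (g x = g y \<longleftrightarrow> (j0 \<in> x \<longleftrightarrow> j0 \<in> y))"
proof -
  let ?V = "H_verts n" and ?U = "{0..<n}"
  have fV: "finite ?V" by (rule H_verts_finite)
  have Vsub: "\<And>x. x \<in> ?V \<Longrightarrow> x \<subseteq> ?U" unfolding H_verts_def by auto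
  have E: "\<And>j l p q. j < n \<Longrightarrow> l < n \<Longrightarrow> p < n \<Longrightarrow> q < n \<Longrightarrow> p \<noteq> q \<Longrightarrow>
     (\<Sum>x\<in>?V. chi (symd (symd {j} {l}) {p,q}) x) = (if (j = p \<and> l = q) \<or> (j = q \<and> l = p) then real (card ?V) else 0)"
  proof -
    fix j l p q assume jl: "j < n" "l < n" "p < n" "q < n" "p \<noteq> q"
    let ?E = "symd (symd {j} {l}) {p,q}"
    show "(\<Sum>x\<in>?V. chi ?E x) = (if (j = p \<and> l = q) \<or> (j = q \<and> l = p) then real (card ?V) else 0)"
    proof (cases "(j = p \<and> l = q) \<or> (j = q \<and> l = p)")
      case True
      hence "?E = {}" using symd_single_eq[OF jl(5), of j l] by (simp only:)
      thus ?thesis using True by simp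
    next
      case False
      hence ne: "?E \<noteq> {}" using symd_single_eq[OF jl(5), of j l] by (simp only: simp_thms)
      have sub: "?E \<subseteq> ?U" using jl by (intro symd_sub) auto
      have "card ?E \<le> card (symd {j} {l}) + card {p,q}" by (rule card_symd_le) (auto simp: symd_def)
      also have "\<dots> \<le> 4" using card_symd_le[of "{j}" "{l}"] jl(5) by simp
      finally have "?E \<noteq> ?U" using n5 by auto
      thus ?thesis by (subst if_not_P[OF False]) (rule orth_V[OF sub ne])
    qed
  qed
  have cpq: "\<And>p q. p < n \<Longrightarrow> q < n \<Longrightarrow> p \<noteq> q \<Longrightarrow> c p * c q = 0"
  proof -
    fix p q assume pq: "p < n" "q < n" "p \<noteq> q"
    have s0: "(\<Sum>x\<in>?V. g x * g x * chi {p,q} x) = 0"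
    proof -
      have "(\<Sum>x\<in>?V. g x * g x * chi {p,q} x) = (\<Sum>x\<in>?V. chi {p,q} x)" using sq by simp
      also have "\<dots> = 0"
      proof (rule orth_V)
        show "{p, q} \<subseteq> ?U" using pq by auto
        show "{p, q} \<noteq> {}" by simp
        have "card {p,q} = 2" using pq by simp
        thus "{p, q} \<noteq> ?U"
        proof (intro notI)
          assume "card {p,q} = 2" "{p,q} = ?U"
          hence "n = 2" by simp
          thus False using n5 by simp
        qed
      qed
      finally show ?thesis .
    qed
    have "(\<Sum>x\<in>?V. g x * g x * chi {p,q} x) = (\<Sum>x\<in>?V. \<Sum>j\<in>?U. \<Sum>l\<in>?U. c j * c l * chi (symd (symd {j} {l}) {p,q}) x)"
    proof (rule sum.cong[OF refl])
      fix x assume x: "x \<in> ?V"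
      have fx: "finite x" using Vsub[OF x] finite_subset by blast
      have "g x * g x * chi {p,q} x = (\<Sum>j\<in>?U. \<Sum>l\<in>?U. (c j * chi {j} x) * (c l * chi {l} x) * chi {p,q} x)"
      proof -
        have "g x * g x = (\<Sum>j\<in>?U. \<Sum>l\<in>?U. (c j * chi {j} x) * (c l * chi {l} x))"
          unfolding ex[OF x] sum_product by simp
        thus ?thesis by (simp add: sum_distrib_right)
      qed
      also have "\<dots> = (\<Sum>j\<in>?U. \<Sum>l\<in>?U. c j * c l * chi (symd (symd {j} {l}) {p,q}) x)"
        by (simp add: chi_symd_left[OF fx] mult_ac)
      finally show "g x * g x * chi {p,q} x = (\<Sum>j\<in>?U. \<Sum>l\<in>?U. c j * c l * chi (symd (symd {j} {l}) {p,q}) x)" .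
    qed
    also have "\<dots> = (\<Sum>j\<in>?U. \<Sum>l\<in>?U. \<Sum>x\<in>?V. c j * c l * chi (symd (symd {j} {l}) {p,q}) x)"
      by (subst sum.swap, rule sum.cong[OF refl], rule sum.swap)
    also have "\<dots> = (\<Sum>j\<in>?U. \<Sum>l\<in>?U. c j * c l * (if (j = p \<and> l = q) \<or> (j = q \<and> l = p) then real (card ?V) else 0))"
      using E pq by (simp add: sum_distrib_left[symmetric])
    also have "\<dots> = (\<Sum>j\<in>?U. \<Sum>l\<in>?U. (if j = p \<and> l = q then c j * c l * real (card ?V) else 0)
                                      + (if j = q \<and> l = p then c j * c l * real (card ?V) else 0))"
      using pq by (intro sum.cong refl) auto
    also have "\<dots> = c p * c q * real (card ?V) + c q * c p * real (card ?V)"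
      by (simp only: sum.distrib double_delta[of ?U p q "\<lambda>j l. c j * c l * real (card ?V)"]
           double_delta[of ?U q p "\<lambda>j l. c j * c l * real (card ?V)"] pq finite_atLeastLessThan atLeastLessThan_iff
           le0 simp_thms)
    finally have "2 * (c p * c q) * real (card ?V) = 0" using s0 by (simp add: algebra_simps)
    moreover have "card ?V > 0" using fV empty_in_V card_gt_0_iff by blast
    ultimately show "c p * c q = 0" by simp
  qed
  have "\<exists>j0<n. c j0 \<noteq> 0"
  proof (rule ccontr)
    assume "\<not> (\<exists>j0<n. c j0 \<noteq> 0)"
    hence "g {} = 0" using ex[OF empty_in_V] by simp
    thus False using sq[OF empty_in_V] by simp
  qed
  then obtain j0 where j0: "j0 < n" "c j0 \<noteq> 0" by blast
  have cz: "\<And>j. j \<in> ?U - {j0} \<Longrightarrow> c j = 0" using cpq j0 by (metis DiffE atLeastLessThan_iff insertI1 mult_eq_0_iff)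
  have gx: "\<And>x. x \<in> ?V \<Longrightarrow> g x = c j0 * chi {j0} x"
  proof -
    fix x assume x: "x \<in> ?V"
    have "g x = c j0 * chi {j0} x + (\<Sum>j\<in>?U - {j0}. c j * chi {j} x)"
      unfolding ex[OF x] using j0 by (simp add: sum.remove)
    also have "(\<Sum>j\<in>?U - {j0}. c j * chi {j} x) = 0" using cz by simp
    finally show "g x = c j0 * chi {j0} x" by simp
  qed
  show ?thesis
  proof (intro exI[of _ j0] conjI ballI j0(1))
    fix x y assume x: "x \<in> ?V" and y: "y \<in> ?V"
    have "g x = g y \<longleftrightarrow> chi {j0} x = chi {j0} y" using gx[OF x] gx[OF y] j0(2) by simp
    also have "\<dots> \<longleftrightarrow> (j0 \<in> x \<longleftrightarrow> j0 \<in> y)" by (simp add: chi_single)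
    finally show "g x = g y \<longleftrightarrow> (j0 \<in> x \<longleftrightarrow> j0 \<in> y)" .
  qed
qed

lemma symd_eq_empty_iff: "symd x y = {} \<longleftrightarrow> x = y" unfolding symd_def by blast
lemma symd_cancel: "symd x (symd x s) = s" unfolding symd_def by blast
lemma mem_symd: "i \<in> symd A B \<longleftrightarrow> \<not> (i \<in> A \<longleftrightarrow> i \<in> B)" unfolding symd_def by blast

theorem corollary4p6:
  fixes n k :: nat
  assumes "n \<ge> 1" and "even k" and "n + 2 \<le> 2 * k" and "k \<le> n - 1"
  shows "is_core (H_verts n) (H_adj n k)"
  unfolding is_core_def
proof (intro allI impI)
  fix f assume endo: "is_endo (H_verts n) (H_adj n k) f"
  let ?V = "H_verts n" and ?U = "{0..<n}" and ?S = "Sk n k"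
  have n5: "n \<ge> 5" using assms by presburger
  have k1: "k \<ge> 1" using assms by simp
  have fV: "\<And>x. x \<in> ?V \<Longrightarrow> f x \<in> ?V" using endo unfolding is_endo_def by blast
  have adj: "\<And>x y. x \<in> ?V \<Longrightarrow> y \<in> ?V \<Longrightarrow> H_adj n k x y \<Longrightarrow> H_adj n k (f x) (f y)"
    using endo unfolding is_endo_def by blast
  have finV: "finite ?V" by (rule H_verts_finite)
  have Vsub: "\<And>x. x \<in> ?V \<Longrightarrow> x \<subseteq> ?U" unfolding H_verts_def by auto
  have SV: "?S \<subseteq> ?V" by (rule Sk_V[OF assms(2)])
  have finS: "finite ?S" unfolding Sk_def by (rule finite_subset[of _ "Pow ?U"]) auto
  have cardS: "card ?S = n choose k" unfolding Sk_def using n_subsets[of ?U k] by simp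
  define g where "g i x = chi {i} (f x)" for i x
  define lam where "lam = real (n choose k) * (real n - 2 * real k) / real n"
  define Q where "Q h = (\<Sum>x\<in>?V. \<Sum>s\<in>?S. h x * h (symd x s))" for h :: "nat set \<Rightarrow> real"
  have adjS: "\<And>x s. x \<in> ?V \<Longrightarrow> s \<in> ?S \<Longrightarrow> card (symd (f x) (f (symd x s))) = k"
  proof -
    fix x s assume x: "x \<in> ?V" and s: "s \<in> ?S"
    have y: "symd x s \<in> ?V" using H_verts_symd[OF x] s SV by blast
    have "H_adj n k x (symd x s)" unfolding H_adj_def hdist_symd symd_cancel
      using x y s unfolding Sk_def by simp
    hence "H_adj n k (f x) (f (symd x s))" using adj x y by blast
    thus "card (symd (f x) (f (symd x s))) = k" unfolding H_adj_def hdist_symd by simp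
  qed
  have sumg: "\<And>x y. x \<in> ?V \<Longrightarrow> y \<in> ?V \<Longrightarrow>
      (\<Sum>i\<in>?U. g i x * g i y) = real n - 2 * real (card (symd (f x) (f y)))"
  proof -
    fix x y assume x: "x \<in> ?V" and y: "y \<in> ?V"
    have "(\<Sum>i\<in>?U. g i x * g i y) = (\<Sum>i\<in>?U. chi {i} (symd (f x) (f y)))"
      unfolding g_def by (simp add: chi_symd)
    also have "\<dots> = real n - 2 * real (card (symd (f x) (f y)))"
      by (rule sum_chi_single) (use Vsub fV x y symd_sub in blast)
    finally show "(\<Sum>i\<in>?U. g i x * g i y) = real n - 2 * real (card (symd (f x) (f y)))" .
  qed
  have Qsum: "(\<Sum>i\<in>?U. Q (g i)) = (\<Sum>i\<in>?U. lam * real (card ?V))"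
  proof -
    have "(\<Sum>i\<in>?U. Q (g i)) = (\<Sum>x\<in>?V. \<Sum>s\<in>?S. \<Sum>i\<in>?U. g i x * g i (symd x s))"
      unfolding Q_def by (subst sum.swap, rule sum.cong[OF refl], rule sum.swap)
    also have "\<dots> = (\<Sum>x\<in>?V. \<Sum>s\<in>?S. real n - 2 * real k)"
    proof (intro sum.cong refl)
      fix x s assume x: "x \<in> ?V" and s: "s \<in> ?S"
      have y: "symd x s \<in> ?V" using H_verts_symd[OF x] s SV by blast
      show "(\<Sum>i\<in>?U. g i x * g i (symd x s)) = real n - 2 * real k"
        using sumg[OF x y] adjS[OF x s] by simp
    qed
    also have "\<dots> = real (card ?V) * (real (n choose k) * (real n - 2 * real k))"
      using cardS by simp
    also have "\<dots> = (\<Sum>i\<in>?U. lam * real (card ?V))"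
      unfolding lam_def using n5 by simp
    finally show ?thesis .
  qed
  have th: "\<And>a. a \<in> Pow ?U \<Longrightarrow> lam \<le> (\<Sum>t\<in>?S. chi a t)"
    unfolding lam_def using theta_bounds(1) assms(2-4) by auto
  have sq: "\<And>i x. g i x * g i x = 1" unfolding g_def chi_single by simp
  have sumsq: "\<And>i. (\<Sum>x\<in>?V. g i x * g i x) = real (card ?V)" using sq by simp
  have Qge: "\<And>i. lam * real (card ?V) \<le> Q (g i)"
  proof -
    fix i
    have "lam * (\<Sum>x\<in>?V. g i x * g i x) \<le> (\<Sum>x\<in>?V. \<Sum>t\<in>?S. g i x * g i (symd x t))"
      by (rule spectral(1)[OF SV th])
    thus "lam * real (card ?V) \<le> Q (g i)" unfolding Q_def sumsq .
  qed
  have Qeq: "\<And>i. i \<in> ?U \<Longrightarrow> Q (g i) = lam * real (card ?V)"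
  proof -
    fix i assume i: "i \<in> ?U"
    have "(\<Sum>i\<in>?U. Q (g i) - lam * real (card ?V)) = 0" using Qsum by (simp add: sum_subtractf)
    hence "\<forall>i\<in>?U. Q (g i) - lam * real (card ?V) = 0"
      by (subst (asm) sum_nonneg_eq_0_iff) (use Qge in auto)
    thus "Q (g i) = lam * real (card ?V)" using i by simp
  qed
  have zero: "\<And>i a. i \<in> ?U \<Longrightarrow> a \<in> Pow ?U \<Longrightarrow> card a \<noteq> 1 \<Longrightarrow> card a \<noteq> n - 1 \<Longrightarrow> ghat n (g i) a = 0"
  proof -
    fix i a assume i: "i \<in> ?U" and a: "a \<in> Pow ?U" and c: "card a \<noteq> 1" "card a \<noteq> n - 1"
    have lt: "lam < (\<Sum>t\<in>?S. chi a t)" unfolding lam_def using theta_bounds(2)[OF _ assms(2-4) c] a by auto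
    have eq: "(\<Sum>x\<in>?V. \<Sum>t\<in>?S. g i x * g i (symd x t)) = lam * (\<Sum>x\<in>?V. g i x * g i x)"
      using Qeq[OF i] sumsq unfolding Q_def by simp
    show "ghat n (g i) a = 0" by (rule spectral(2)[OF SV th eq a lt])
  qed
  have dict: "\<And>i. i \<in> ?U \<Longrightarrow> \<exists>j0<n. \<forall>x\<in>?V. \<forall>y\<in>?V. (g i x = g i y \<longleftrightarrow> (j0 \<in> x \<longleftrightarrow> j0 \<in> y))"
  proof -
    fix i assume i: "i \<in> ?U"
    show "\<exists>j0<n. \<forall>x\<in>?V. \<forall>y\<in>?V. (g i x = g i y \<longleftrightarrow> (j0 \<in> x \<longleftrightarrow> j0 \<in> y))"
    proof (rule dictator[OF n5, of "g i" "\<lambda>j. (ghat n (g i) {j} + ghat n (g i) (?U - {j})) / real (card (Pow ?U))"])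
      show "\<And>x. g i x * g i x = 1" by (rule sq)
      fix x assume x: "x \<in> ?V"
      show "g i x = (\<Sum>j\<in>?U. ((ghat n (g i) {j} + ghat n (g i) (?U - {j})) / real (card (Pow ?U))) * chi {j} x)"
        by (rule expansion[OF _ zero[OF i] x]) (use n5 in simp)
    qed
  qed
  obtain \<pi> where \<pi>: "\<And>i. i \<in> ?U \<Longrightarrow> \<pi> i < n \<and> (\<forall>x\<in>?V. \<forall>y\<in>?V. (g i x = g i y \<longleftrightarrow> (\<pi> i \<in> x \<longleftrightarrow> \<pi> i \<in> y)))"
    using dict by metis
  have memb: "\<And>i x y. i \<in> ?U \<Longrightarrow> x \<in> ?V \<Longrightarrow> y \<in> ?V \<Longrightarrow> (i \<in> symd (f x) (f y) \<longleftrightarrow> \<pi> i \<in> symd x y)"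
  proof -
    fix i x y assume i: "i \<in> ?U" and x: "x \<in> ?V" and y: "y \<in> ?V"
    have "g i x = g i y \<longleftrightarrow> (i \<in> f x \<longleftrightarrow> i \<in> f y)" unfolding g_def chi_single by auto
    thus "i \<in> symd (f x) (f y) \<longleftrightarrow> \<pi> i \<in> symd x y" using \<pi>[OF i] x y unfolding mem_symd by blast
  qed
  have symdF: "\<And>x y. x \<in> ?V \<Longrightarrow> y \<in> ?V \<Longrightarrow> symd (f x) (f y) = {i\<in>?U. \<pi> i \<in> symd x y}"
  proof -
    fix x y assume x: "x \<in> ?V" and y: "y \<in> ?V"
    have "symd (f x) (f y) \<subseteq> ?U" using Vsub fV x y symd_sub by blast
    thus "symd (f x) (f y) = {i\<in>?U. \<pi> i \<in> symd x y}" using memb x y by blast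
  qed
  define M where "M j = card {i\<in>?U. \<pi> i = j}" for j
  have cardsum: "\<And>D. D \<subseteq> ?U \<Longrightarrow> card {i\<in>?U. \<pi> i \<in> D} = (\<Sum>j\<in>D. M j)"
  proof -
    fix D assume D: "D \<subseteq> ?U"
    have fD: "finite D" using D finite_subset by blast
    have "{i\<in>?U. \<pi> i \<in> D} = (\<Union>j\<in>D. {i\<in>?U. \<pi> i = j})" by blast
    hence "card {i\<in>?U. \<pi> i \<in> D} = card (\<Union>j\<in>D. {i\<in>?U. \<pi> i = j})" by simp
    also have "\<dots> = (\<Sum>j\<in>D. card {i\<in>?U. \<pi> i = j})"
      by (rule card_UN_disjoint[OF fD]) auto
    finally show "card {i\<in>?U. \<pi> i \<in> D} = (\<Sum>j\<in>D. M j)" unfolding M_def .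
  qed
  have cnt: "\<And>s. s \<in> ?S \<Longrightarrow> (\<Sum>j\<in>s. M j) = k"
  proof -
    fix s assume s: "s \<in> ?S"
    have sV: "s \<in> ?V" using s SV by blast
    have "card (symd (f {}) (f (symd {} s))) = k" using adjS[OF empty_in_V s] .
    hence "card (symd (f {}) (f s)) = k" by simp
    hence "card {i\<in>?U. \<pi> i \<in> symd {} s} = k" using symdF[OF empty_in_V sV] by simp
    thus "(\<Sum>j\<in>s. M j) = k" using cardsum[of s] s unfolding Sk_def by simp
  qed
  have Meq: "\<And>j j'. j \<in> ?U \<Longrightarrow> j' \<in> ?U \<Longrightarrow> M j = M j'"
  proof -
    fix j j' assume j: "j \<in> ?U" and j': "j' \<in> ?U"
    show "M j = M j'"
    proof (cases "j = j'")
      case True thus ?thesis by simp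
    next
      case False
      have "card (?U - {j, j'}) = n - 2" using j j' False by (simp add: card_Diff_subset)
      hence "k - 1 \<le> card (?U - {j, j'})" using assms by simp
      then obtain s0 where s0: "s0 \<subseteq> ?U - {j, j'}" "card s0 = k - 1" "finite s0"
        by (rule obtain_subset_with_card_n)
      have nj: "j \<notin> s0" "j' \<notin> s0" using s0 by auto
      have "insert j s0 \<in> ?S" using s0 j k1 nj unfolding Sk_def by auto
      hence "(\<Sum>i\<in>insert j s0. M i) = k" by (rule cnt)
      hence a: "M j + (\<Sum>i\<in>s0. M i) = k" using sum.insert[OF s0(3) nj(1), of M] by simp
      have "insert j' s0 \<in> ?S" using s0 j' k1 nj unfolding Sk_def by auto
      hence "(\<Sum>i\<in>insert j' s0. M i) = k" by (rule cnt)
      hence b: "M j' + (\<Sum>i\<in>s0. M i) = k" using sum.insert[OF s0(3) nj(2), of M] by simp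
      show ?thesis using a b by simp
    qed
  qed
  have M1: "\<And>j. j \<in> ?U \<Longrightarrow> M j = 1"
  proof -
    fix j assume j: "j \<in> ?U"
    have "k \<le> card ?U" using assms by simp
    then obtain s where s: "s \<subseteq> ?U" "card s = k" "finite s" by (rule obtain_subset_with_card_n)
    have "s \<in> ?S" using s unfolding Sk_def by auto
    hence "(\<Sum>i\<in>s. M i) = k" by (rule cnt)
    moreover have "(\<Sum>i\<in>s. M i) = (\<Sum>i\<in>s. M j)"
    proof (rule sum.cong[OF refl])
      fix i assume "i \<in> s"
      hence "i \<in> ?U" using s by blast
      thus "M i = M j" by (rule Meq[OF _ j])
    qed
    ultimately have "k * M j = k" using s by simp
    thus "M j = 1" using k1 by simp
  qed
  have iso: "\<And>x y. x \<in> ?V \<Longrightarrow> y \<in> ?V \<Longrightarrow> hdist (f x) (f y) = hdist x y"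
  proof -
    fix x y assume x: "x \<in> ?V" and y: "y \<in> ?V"
    have D: "symd x y \<subseteq> ?U" using Vsub x y symd_sub by blast
    have "hdist (f x) (f y) = card {i\<in>?U. \<pi> i \<in> symd x y}" unfolding hdist_symd using symdF[OF x y] by simp
    also have "\<dots> = (\<Sum>j\<in>symd x y. M j)" by (rule cardsum[OF D])
    also have "\<dots> = (\<Sum>j\<in>symd x y. 1)" using M1 D by (intro sum.cong) auto
    also have "\<dots> = hdist x y" unfolding hdist_symd by simp
    finally show "hdist (f x) (f y) = hdist x y" .
  qed
  have inj: "inj_on f ?V"
  proof (rule inj_onI)
    fix x y assume x: "x \<in> ?V" and y: "y \<in> ?V" and e: "f x = f y"
    have "hdist x y = 0" using iso[OF x y] e unfolding hdist_symd symd_def by simp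
    moreover have "finite (symd x y)" using Vsub x y symd_sub finite_subset by (metis finite_atLeastLessThan)
    ultimately have "symd x y = {}" unfolding hdist_symd by simp
    thus "x = y" using symd_eq_empty_iff by blast
  qed
  have img: "f ` ?V = ?V"
  proof (rule card_subset_eq[OF finV])
    show "f ` ?V \<subseteq> ?V" using fV by blast
    show "card (f ` ?V) = card ?V" by (rule card_image[OF inj])
  qed
  show "is_auto ?V (H_adj n k) f"
    unfolding is_auto_def
  proof (intro conjI ballI)
    show "bij_betw f ?V ?V" unfolding bij_betw_def using inj img by blast
    fix x y assume x: "x \<in> ?V" and y: "y \<in> ?V"
    show "H_adj n k x y = H_adj n k (f x) (f y)"
      unfolding H_adj_def using x y fV iso[OF x y] by auto
  qed
qed

end
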